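(* Let $f\in \mathfrak{D}$ have degree $j$, write $f=\sum_i f_i$ with $f_i$ homogeneous of degree $i$, let $A=R/\operatorname{Ann}_R f$, let $a$ be an integer with $0\le a\le j$, set $f_{\ge j-a}=f_j+f_{j-1}+\cdots+f_{j-a}$ and $A'=R/\operatorname{Ann}_R(f_{\ge j-a})$. Then the partial symmetric decompositions agree: $\mathcal{D}_{\le a}(A)=\mathcal{D}_{\le a}(A')$. These partial decompositions depend only on $f$ modulo $\mathfrak{D}_{\le j-a-1}$ up to the action of a unit of $R$ (i.e. if $g\in\mathfrak{D}$ has degree $j$ and $g-u\circ f\in \mathfrak{D}_{\le j-a-1}$ for some unit $u\in R$, then $\mathcal{D}_{\le a}(R/\operatorname{Ann}_R g)=\mathcal{D}_{\le a}(A)$). Moreover $f_{\ge j-a}$ is an $(a+1)$-modification of $f$, i.e. $(\operatorname{Ann}_R f)\cap \mathfrak{m}_R^{\,j-a}=(\operatorname{Ann}_R f_{\ge j-a})\cap\mathfrak{m}_R^{\,j-a}$.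
   Context: Let $\mathsf{k}$ be a field, $R=\mathsf{k}\{x_1,\ldots,x_r\}$ the formal power series ring with maximal ideal $\mathfrak{m}_R$, and $\mathfrak{D}=\mathsf{k}_{DP}[X_1,\ldots,X_r]$ the divided power algebra (divided powers $X_i^{[n]}$), on which $R$ acts by contraction: $x^{\alpha}\circ X^{[\beta]}=X^{[\beta-\alpha]}$ if $\beta-\alpha\ge 0$ componentwise and $0$ otherwise, extended bilinearly. $\mathfrak{D}_t$ denotes the forms of degree $t$ and $\mathfrak{D}_{\le t}$ the elements of degree at most $t$. For $f\in\mathfrak{D}$ of degree $j$, $\operatorname{Ann}_R f=\{\varphi\in R:\varphi\circ f=0\}$ and $A=R/\operatorname{Ann}_R f$ is an Artinian Gorenstein algebra with maximal ideal $\mathfrak{m}_A$ and socle degree $j$ (largest $i$ with $\mathfrak{m}_A^i\neq 0$). Its associated graded algebra is $A^*=\bigoplus_i \mathfrak{m}_A^i/\mathfrak{m}_A^{i+1}$. For $a\ge 0$ the ideal $C_A(a)\subset A^*$ has degree-$i$ component equal to the image in $\mathfrak{m}_A^i/\mathfrak{m}_A^{i+1}$ of $\mathfrak{m}_A^{i}\cap(0:\mathfrak{m}_A^{\,j+1-a-i})$; $Q_A(a)=C_A(a)/C_A(a+1)$, $H_A(a)$ is the Hilbert function of $Q_A(a)$ ($H_A(a)_i=\dim_{\mathsf{k}}Q_A(a)_i$), and the partial symmetric decomposition is $\mathcal{D}_{\le a}(A)=(H_A(0),\ldots,H_A(a))$. An Artinian Gorenstein ideal $J$ (or a dual generator $g$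 with $J=\operatorname{Ann}_R g$) is called an $b$-modification of $I=\operatorname{Ann}_R f$ (socle degree $j$) if $I\cap\mathfrak{m}_R^{\,j+1-b}=J\cap\mathfrak{m}_R^{\,j+1-b}$. *)

theory Defs
  imports Main "HOL-Library.Function_Algebras"
begin

text \<open>Monomials / exponent vectors in r variables are functions
  nat => nat vanishing from index r on. Both the power series ring
  R = k{x_1..x_r} and the divided power algebra D = k_DP[X_1..X_r] are
  represented by coefficient functions (nat => nat) => 'k; an element of R
  is any coefficient function supported on monomials (PS), an element of D
  is one with finite support (DP). The coefficient of the element of D at
  the exponent vector beta is the coefficient of X^[beta].\<close>

type_synonym 'k coeffs = "(nat \<Rightarrow> nat) \<Rightarrow> 'k"

definition mon :: "nat \<Rightarrow> (nat \<Rightarrow> nat) set" where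
  "mon r = {\<alpha>. \<forall>i\<ge>r. \<alpha> i = 0}"

definition mdeg :: "nat \<Rightarrow> (nat \<Rightarrow> nat) \<Rightarrow> nat" where
  "mdeg r \<alpha> = (\<Sum>i<r. \<alpha> i)"

definition PS :: "nat \<Rightarrow> ('k::field) coeffs set" where
  "PS r = {\<phi>. \<forall>\<alpha>. \<alpha> \<notin> mon r \<longrightarrow> \<phi> \<alpha> = 0}"

definition DP :: "nat \<Rightarrow> ('k::field) coeffs set" where
  "DP r = {F \<in> PS r. finite {\<alpha>. F \<alpha> \<noteq> 0}}"

definition ps_mult :: "('k::field) coeffs \<Rightarrow> 'k coeffs \<Rightarrow> 'k coeffs" where
  "ps_mult \<phi> \<psi> = (\<lambda>\<gamma>. \<Sum>\<alpha>\<in>{\<alpha>. \<forall>i. \<alpha> i \<le> \<gamma> i}. \<phi> \<alpha> * \<psi> (\<gamma> - \<alpha>))"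

definition ps_one :: "('k::field) coeffs" where
  "ps_one = (\<lambda>\<alpha>. if \<alpha> = 0 then 1 else 0)"

definition is_unit_R :: "nat \<Rightarrow> ('k::field) coeffs \<Rightarrow> bool" where
  "is_unit_R r u \<longleftrightarrow> u \<in> PS r \<and> (\<exists>v\<in>PS r. ps_mult u v = ps_one)"

text \<open>Contraction action of R on D:
  x^alpha o X^[beta] = X^[beta - alpha] if alpha <= beta, else 0.\<close>
definition contract :: "nat \<Rightarrow> ('k::field) coeffs \<Rightarrow> 'k coeffs \<Rightarrow> 'k coeffs" where
  "contract r \<phi> F = (\<lambda>\<gamma>. if \<gamma> \<in> mon r then
      (\<Sum>\<beta>\<in>{\<beta>. F \<beta> \<noteq> 0}. if (\<forall>i. \<gamma> i \<le> \<beta> i) then \<phi> (\<beta> - \<gamma>) * F \<beta> else 0)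
    else 0)"

definition Ann :: "nat \<Rightarrow> ('k::field) coeffs \<Rightarrow> 'k coeffs set" where
  "Ann r F = {\<phi> \<in> PS r. contract r \<phi> F = (\<lambda>_. 0)}"

definition has_degree :: "nat \<Rightarrow> ('k::field) coeffs \<Rightarrow> nat \<Rightarrow> bool" where
  "has_degree r F j \<longleftrightarrow> (\<forall>\<beta>. F \<beta> \<noteq> 0 \<longrightarrow> mdeg r \<beta> \<le> j) \<and> (\<exists>\<beta>. F \<beta> \<noteq> 0 \<and> mdeg r \<beta> = j)"

text \<open>Elements of D of degree < t  (so D_{<= t-1}).\<close>
definition Dlt :: "nat \<Rightarrow> nat \<Rightarrow> ('k::field) coeffs set" where
  "Dlt r t = {F \<in> DP r. \<forall>\<beta>. F \<beta> \<noteq> 0 \<longrightarrow> mdeg r \<beta> < t}"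

definition trunc_ge :: "nat \<Rightarrow> ('k::field) coeffs \<Rightarrow> nat \<Rightarrow> 'k coeffs" where
  "trunc_ge r F m = (\<lambda>\<beta>. if m \<le> mdeg r \<beta> then F \<beta> else 0)"

definition mpow :: "nat \<Rightarrow> nat \<Rightarrow> ('k::field) coeffs set" where
  "mpow r i = {\<phi> \<in> PS r. \<forall>\<alpha>. mdeg r \<alpha> < i \<longrightarrow> \<phi> \<alpha> = 0}"

definition ssum :: "('k::field) coeffs set \<Rightarrow> 'k coeffs set \<Rightarrow> 'k coeffs set" where
  "ssum U V = {u + v | u v. u \<in> U \<and> v \<in> V}"

definition colon :: "nat \<Rightarrow> ('k::field) coeffs set \<Rightarrow> 'k coeffs set \<Rightarrow> 'k coeffs set" where
  "colon r I K = {\<phi> \<in> PS r. \<forall>\<psi>\<in>K. ps_mult \<phi> \<psi> \<in> I}"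

text \<open>Dimension of the quotient space V/U (U a subspace of V):
  the supremum of sizes of finite subsets of V linearly independent modulo U.\<close>
definition qdim :: "('k::field) coeffs set \<Rightarrow> 'k coeffs set \<Rightarrow> nat" where
  "qdim V U = Sup {card S | S. finite S \<and> S \<subseteq> V \<and>
      (\<forall>c. (\<Sum>s\<in>S. (\<lambda>x. c s * s x)) \<in> U \<longrightarrow> (\<forall>s\<in>S. c s = 0))}"

text \<open>Socle degree of A = R/I: the largest i with m_A^i \<noteq> 0, i.e. m_R^i not contained in I.\<close>
definition socdeg :: "nat \<Rightarrow> ('k::field) coeffs set \<Rightarrow> nat" where
  "socdeg r I = (GREATEST i. \<not> (mpow r i \<subseteq> (I :: 'k coeffs set)))"

text \<open>Preimage in R of C_A(a)_i + m_A^{i+1}, where A = R/I of socle degree j: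
  ((m_R^i + I) \<inter> (I : m_R^{j+1-a-i})) + m_R^{i+1} + I.
  (If j+1-a-i <= 0 then m_A^{j+1-a-i} = A and (0 : A) = 0, which matches
  the truncated natural-number subtraction, since (I : R) = I.)\<close>
definition Wsp :: "nat \<Rightarrow> ('k::field) coeffs set \<Rightarrow> nat \<Rightarrow> nat \<Rightarrow> 'k coeffs set" where
  "Wsp r I a i = ssum (ssum (ssum (mpow r i) I \<inter> colon r I (mpow r (socdeg r I + 1 - a - i)))
                            (mpow r (Suc i))) I"

text \<open>H_A(a)_i = dim Q_A(a)_i = dim C_A(a)_i / C_A(a+1)_i.\<close>
definition HA :: "nat \<Rightarrow> ('k::field) coeffs set \<Rightarrow> nat \<Rightarrow> nat \<Rightarrow> nat" where
  "HA r I a i = qdim (Wsp r I a i) (Wsp r I (Suc a) i)"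

definition psd :: "nat \<Rightarrow> ('k::field) coeffs set \<Rightarrow> nat \<Rightarrow> (nat \<Rightarrow> nat) list" where
  "psd r I a = map (\<lambda>b. HA r I b) [0..<Suc a]"

definition is_modification :: "nat \<Rightarrow> ('k::field) coeffs set \<Rightarrow> 'k coeffs set \<Rightarrow> nat \<Rightarrow> bool" where
  "is_modification r I J b \<longleftrightarrow>
     I \<inter> mpow r (socdeg r I + 1 - b) = J \<inter> mpow r (socdeg r I + 1 - b)"

end

theory Submission
  imports Defs
begin


lemma sum_fun_apply: "(\<Sum>v\<in>S. (F v :: 'a \<Rightarrow> 'b::comm_monoid_add)) z = (\<Sum>v\<in>S. F v z)"
  by (induction S rule: infinite_finite_induct) auto

lemma mdeg_diff_le: "mdeg r (\<beta> - \<gamma>) \<le> mdeg r \<beta>"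
  unfolding mdeg_def by (rule sum_mono) auto

lemma mdeg_add: "mdeg r (\<alpha> + \<beta>) = mdeg r \<alpha> + mdeg r \<beta>"
  unfolding mdeg_def by (simp add: sum.distrib)

lemma mdeg_split: "\<forall>i. \<alpha> i \<le> \<gamma> i \<Longrightarrow> mdeg r \<alpha> + mdeg r (\<gamma> - \<alpha>) = mdeg r \<gamma>"
  unfolding mdeg_def by (simp add: sum.distrib[symmetric])

lemma finite_le: assumes g: "\<gamma> \<in> mon r" shows "finite {\<alpha>. \<forall>i. \<alpha> i \<le> \<gamma> i}"
proof -
  have "{\<alpha>. \<forall>i. \<alpha> i \<le> \<gamma> i} \<subseteq> {f. \<forall>x. (x \<in> {..<r} \<longrightarrow> f x \<in> {..Max (\<gamma> ` {..<r})}) \<and> (x \<notin> {..<r} \<longrightarrow> f x = 0)}"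
  proof
    fix \<alpha> assume "\<alpha> \<in> {\<alpha>. \<forall>i. \<alpha> i \<le> \<gamma> i}"
    then have a: "\<forall>i. \<alpha> i \<le> \<gamma> i" by simp
    have 1: "\<alpha> x \<in> {..Max (\<gamma> ` {..<r})}" if "x \<in> {..<r}" for x
    proof -
      have "\<gamma> x \<le> Max (\<gamma> ` {..<r})" by (rule Max_ge) (use that in auto)
      then show ?thesis using a le_trans by (simp only: atMost_iff) blast
    qed
    have 2: "\<alpha> x = 0" if "x \<notin> {..<r}" for x
    proof -
      have "\<gamma> x = 0" using g that unfolding mon_def by simp
      then show ?thesis using a by (metis le_zero_eq)
    qed
    show "\<alpha> \<in> {f. \<forall>x. (x \<in> {..<r} \<longrightarrow> f x \<in> {..Max (\<gamma> ` {..<r})}) \<and> (x \<notin> {..<r} \<longrightarrow> f x = 0)}"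
      using 1 2 by blast
  qed
  then show ?thesis by (rule finite_subset) (rule finite_set_of_finite_funs; simp)
qed

lemma DP_fin: "F \<in> DP r \<Longrightarrow> finite {\<beta>. F \<beta> \<noteq> 0}" by (simp add: DP_def)
lemma DP_PS: "F \<in> DP r \<Longrightarrow> F \<in> PS r" by (simp add: DP_def)
lemma PS_mon: "F \<in> PS r \<Longrightarrow> F \<beta> \<noteq> 0 \<Longrightarrow> \<beta> \<in> mon r" by (auto simp: PS_def)

lemma mon_le: assumes b: "\<beta> \<in> mon r" and a: "\<forall>i. \<alpha> i \<le> \<beta> i" shows "\<alpha> \<in> mon r"
  unfolding mon_def
proof (intro CollectI allI impI)
  fix i assume "r \<le> i"
  then have "\<beta> i = 0" using b unfolding mon_def by blast
  then show "\<alpha> i = 0" using a le_zero_eq by metis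
qed

lemma mon_diff: "\<beta> \<in> mon r \<Longrightarrow> \<beta> - \<gamma> \<in> mon r"
  unfolding mon_def by simp

lemma contract_sum:
  assumes F: "F \<in> DP r" and T: "finite T" "{\<beta>. F \<beta> \<noteq> 0} \<subseteq> T"
  shows "contract r \<phi> F \<gamma> = (if \<gamma> \<in> mon r then
      (\<Sum>\<beta>\<in>T. if (\<forall>i. \<gamma> i \<le> \<beta> i) then \<phi> (\<beta> - \<gamma>) * F \<beta> else 0) else 0)"
  unfolding contract_def using T by (auto intro!: sum.mono_neutral_left split: if_splits)


lemma contract_nz:
  assumes "contract r \<phi> F \<gamma> \<noteq> 0"
  obtains \<beta> where "F \<beta> \<noteq> 0" "\<forall>i. \<gamma> i \<le> \<beta> i"
proof -
  have "(\<Sum>\<beta>\<in>{\<beta>. F \<beta> \<noteq> 0}. if (\<forall>i. \<gamma> i \<le> \<beta> i) then \<phi> (\<beta> - \<gamma>) * F \<beta> else 0) \<noteq> 0"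
    using assms unfolding contract_def by (cases "\<gamma> \<in> mon r") simp_all
  then obtain \<beta> where b: "\<beta> \<in> {\<beta>. F \<beta> \<noteq> 0}"
     "(if (\<forall>i. \<gamma> i \<le> \<beta> i) then \<phi> (\<beta> - \<gamma>) * F \<beta> else 0) \<noteq> 0"
    by (rule sum.not_neutral_contains_not_neutral)
  then have "\<forall>i. \<gamma> i \<le> \<beta> i" by (cases "\<forall>i. \<gamma> i \<le> \<beta> i") simp_all
  with b(1) show ?thesis using that by simp
qed

lemma contract_supp:
  shows "{\<gamma>. contract r \<phi> F \<gamma> \<noteq> 0} \<subseteq> (\<Union>\<beta>\<in>{\<beta>. F \<beta> \<noteq> 0}. {\<gamma>. \<forall>i. \<gamma> i \<le> \<beta> i})"
proof
  fix \<gamma> assume "\<gamma> \<in> {\<gamma>. contract r \<phi> F \<gamma> \<noteq> 0}"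
  then have "contract r \<phi> F \<gamma> \<noteq> 0" by simp
  then obtain \<beta> where "F \<beta> \<noteq> 0" "\<forall>i. \<gamma> i \<le> \<beta> i" by (rule contract_nz)
  then show "\<gamma> \<in> (\<Union>\<beta>\<in>{\<beta>. F \<beta> \<noteq> 0}. {\<gamma>. \<forall>i. \<gamma> i \<le> \<beta> i})" by blast
qed

lemma finT:
  assumes F: "F \<in> DP r"
  shows "finite (\<Union>\<beta>\<in>{\<beta>. F \<beta> \<noteq> 0}. {\<gamma>. \<forall>i. \<gamma> i \<le> \<beta> i})"
proof (rule finite_UN_I)
  show "finite {\<beta>. F \<beta> \<noteq> 0}" by (rule DP_fin[OF F])
  fix \<beta> assume "\<beta> \<in> {\<beta>. F \<beta> \<noteq> 0}"
  then have "\<beta> \<in> mon r" using F unfolding DP_def PS_def by blast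
  then show "finite {\<gamma>. \<forall>i. \<gamma> i \<le> \<beta> i}" by (rule finite_le)
qed

lemma contract_DP:
  assumes F: "F \<in> DP r" shows "contract r \<phi> F \<in> DP r"
proof -
  have "finite {\<gamma>. contract r \<phi> F \<gamma> \<noteq> 0}" using finT[OF F] contract_supp by (rule finite_subset[rotated])
  moreover have "contract r \<phi> F \<in> PS r" unfolding PS_def contract_def by simp
  ultimately show ?thesis unfolding DP_def by blast
qed

lemma contract_zero: "contract r \<phi> (\<lambda>_. 0) = (\<lambda>_. 0)"
  by (simp add: contract_def fun_eq_iff)

lemma ps_mult_comm: "ps_mult \<phi> \<psi> = ps_mult \<psi> \<phi>"
  unfolding ps_mult_def
proof (rule ext, rule sum.reindex_bij_witness[where i="\<lambda>\<alpha>. _ - \<alpha>" and j="\<lambda>\<alpha>. _ - \<alpha>"])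
  fix \<gamma> :: "nat \<Rightarrow> nat" and a
  assume a: "a \<in> {\<alpha>. \<forall>i. \<alpha> i \<le> \<gamma> i}"
  show "\<gamma> - (\<gamma> - a) = a" using a by (auto simp: fun_eq_iff)
  show "\<gamma> - a \<in> {\<alpha>. \<forall>i. \<alpha> i \<le> \<gamma> i}" by auto
  have "\<gamma> - (\<gamma> - a) = a" using a by (auto simp: fun_eq_iff)
  then show "\<psi> (\<gamma> - a) * \<phi> (\<gamma> - (\<gamma> - a)) = \<phi> a * \<psi> (\<gamma> - a)"
    by (simp add: mult.commute)
qed auto

lemma ps_mult_PS: "\<phi> \<in> PS r \<Longrightarrow> \<psi> \<in> PS r \<Longrightarrow> ps_mult \<phi> \<psi> \<in> PS r"
  unfolding PS_def ps_mult_def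
proof (safe, rule sum.neutral, safe)
  fix \<gamma> \<alpha> assume p: "\<forall>\<alpha>. \<alpha> \<notin> mon r \<longrightarrow> \<phi> \<alpha> = 0" "\<forall>\<alpha>. \<alpha> \<notin> mon r \<longrightarrow> \<psi> \<alpha> = 0"
    and g: "\<gamma> \<notin> mon r" and a: "\<forall>i. \<alpha> i \<le> \<gamma> i"
  show "\<phi> \<alpha> * \<psi> (\<gamma> - \<alpha>) = 0"
  proof (cases "\<alpha> \<in> mon r")
    case True
    then have "\<gamma> - \<alpha> \<notin> mon r" using g a unfolding mon_def
      by auto
    then show ?thesis using p by simp
  qed (use p in simp)
qed

lemma ps_mult_mpow: "\<phi> \<in> mpow r i \<Longrightarrow> \<psi> \<in> mpow r k \<Longrightarrow> ps_mult \<phi> \<psi> \<in> mpow r (i + k)"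
proof -
  assume a: "\<phi> \<in> mpow r i" "\<psi> \<in> mpow r k"
  have "ps_mult \<phi> \<psi> \<in> PS r" using a by (intro ps_mult_PS) (auto simp: mpow_def)
  moreover have "ps_mult \<phi> \<psi> \<gamma> = 0" if "mdeg r \<gamma> < i + k" for \<gamma>
    unfolding ps_mult_def
  proof (rule sum.neutral, safe)
    fix \<alpha> assume "\<forall>j. \<alpha> j \<le> \<gamma> j"
    then have "mdeg r \<alpha> + mdeg r (\<gamma> - \<alpha>) = mdeg r \<gamma>" by (rule mdeg_split)
    then have "mdeg r \<alpha> < i \<or> mdeg r (\<gamma> - \<alpha>) < k" using that by linarith
    then show "\<phi> \<alpha> * \<psi> (\<gamma> - \<alpha>) = 0" using a by (auto simp: mpow_def)
  qed
  ultimately show ?thesis by (simp add: mpow_def)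
qed



lemma contract_mult:
  assumes F: "F \<in> DP r"
  shows "contract r (ps_mult \<phi> \<psi>) F = contract r \<phi> (contract r \<psi> F)"
proof (rule ext)
  fix \<gamma>
  let ?S = "{\<beta>. F \<beta> \<noteq> 0}"
  let ?T = "\<Union>\<beta>\<in>?S. {\<gamma>. \<forall>i. \<gamma> i \<le> \<beta> i}"
  have Smon: "\<beta> \<in> mon r" if "F \<beta> \<noteq> 0" for \<beta> using F that unfolding DP_def PS_def by blast
  have finS: "finite ?S" using F by (simp add: DP_fin)
  have finT: "finite ?T" by (rule finT[OF F])
  have Tmon: "\<beta> \<in> mon r" if hb: "\<beta> \<in> ?T" for \<beta>
  proof -
    obtain \<delta> where "F \<delta> \<noteq> 0" "\<forall>i. \<beta> i \<le> \<delta> i" using hb by blast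
    then show ?thesis using Smon mon_le by blast
  qed
  show "contract r (ps_mult \<phi> \<psi>) F \<gamma> = contract r \<phi> (contract r \<psi> F) \<gamma>"
  proof (cases "\<gamma> \<in> mon r")
    case False then show ?thesis by (simp add: contract_def)
  next
    case g: True
    have "contract r \<phi> (contract r \<psi> F) \<gamma> =
      (\<Sum>\<beta>\<in>?T. if (\<forall>i. \<gamma> i \<le> \<beta> i) then \<phi> (\<beta> - \<gamma>) * contract r \<psi> F \<beta> else 0)"
      using g contract_sum[OF contract_DP[OF F] finT contract_supp] by simp
    also have "\<dots> = (\<Sum>\<beta>\<in>?T. \<Sum>\<delta>\<in>?S. if (\<forall>i. \<gamma> i \<le> \<beta> i) \<and> (\<forall>i. \<beta> i \<le> \<delta> i)
        then \<phi> (\<beta> - \<gamma>) * (\<psi> (\<delta> - \<beta>) * F \<delta>) else 0)"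
    proof (rule sum.cong[OF refl])
      fix \<beta> assume b: "\<beta> \<in> ?T"
      show "(if (\<forall>i. \<gamma> i \<le> \<beta> i) then \<phi> (\<beta> - \<gamma>) * contract r \<psi> F \<beta> else 0) =
        (\<Sum>\<delta>\<in>?S. if (\<forall>i. \<gamma> i \<le> \<beta> i) \<and> (\<forall>i. \<beta> i \<le> \<delta> i)
        then \<phi> (\<beta> - \<gamma>) * (\<psi> (\<delta> - \<beta>) * F \<delta>) else 0)"
      proof (cases "\<forall>i. \<gamma> i \<le> \<beta> i")
        case True
        then show ?thesis using Tmon[OF b] by (simp add: contract_def sum_distrib_left if_distrib cong: if_cong)
      next
        case False
        then have c: "(\<forall>i. \<gamma> i \<le> \<beta> i) = False" by blast
        show ?thesis unfolding c by simp
      qed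
    qed
    also have "\<dots> = (\<Sum>\<delta>\<in>?S. \<Sum>\<beta>\<in>?T. if (\<forall>i. \<gamma> i \<le> \<beta> i) \<and> (\<forall>i. \<beta> i \<le> \<delta> i)
        then \<phi> (\<beta> - \<gamma>) * (\<psi> (\<delta> - \<beta>) * F \<delta>) else 0)"
      by (rule sum.swap)
    also have "\<dots> = (\<Sum>\<delta>\<in>?S. if (\<forall>i. \<gamma> i \<le> \<delta> i) then ps_mult \<phi> \<psi> (\<delta> - \<gamma>) * F \<delta> else 0)"
    proof (rule sum.cong[OF refl])
      fix \<delta> assume d: "\<delta> \<in> ?S"
      show "(\<Sum>\<beta>\<in>?T. if (\<forall>i. \<gamma> i \<le> \<beta> i) \<and> (\<forall>i. \<beta> i \<le> \<delta> i)
        then \<phi> (\<beta> - \<gamma>) * (\<psi> (\<delta> - \<beta>) * F \<delta>) else 0) =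
        (if (\<forall>i. \<gamma> i \<le> \<delta> i) then ps_mult \<phi> \<psi> (\<delta> - \<gamma>) * F \<delta> else 0)"
      proof (cases "\<forall>i. \<gamma> i \<le> \<delta> i")
        case False
        then have c: "((\<forall>i. \<gamma> i \<le> \<beta> i) \<and> (\<forall>i. \<beta> i \<le> \<delta> i)) = False" for \<beta>
          using le_trans by blast
        have c2: "(\<forall>i. \<gamma> i \<le> \<delta> i) = False" using False by blast
        show ?thesis unfolding c c2 if_False by (rule sum.neutral_const)
      next
        case gd: True
        have "(\<Sum>\<beta>\<in>?T. if (\<forall>i. \<gamma> i \<le> \<beta> i) \<and> (\<forall>i. \<beta> i \<le> \<delta> i)
          then \<phi> (\<beta> - \<gamma>) * (\<psi> (\<delta> - \<beta>) * F \<delta>) else 0) =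
          (\<Sum>\<beta>\<in>{\<beta>\<in>?T. (\<forall>i. \<gamma> i \<le> \<beta> i) \<and> (\<forall>i. \<beta> i \<le> \<delta> i)}. \<phi> (\<beta> - \<gamma>) * (\<psi> (\<delta> - \<beta>) * F \<delta>))"
          by (rule sum.inter_filter[OF finT, symmetric])
        also have "{\<beta>\<in>?T. (\<forall>i. \<gamma> i \<le> \<beta> i) \<and> (\<forall>i. \<beta> i \<le> \<delta> i)} =
            {\<beta>. (\<forall>i. \<gamma> i \<le> \<beta> i) \<and> (\<forall>i. \<beta> i \<le> \<delta> i)}" using d by auto
        also have "(\<Sum>\<beta>\<in>{\<beta>. (\<forall>i. \<gamma> i \<le> \<beta> i) \<and> (\<forall>i. \<beta> i \<le> \<delta> i)}. \<phi> (\<beta> - \<gamma>) * (\<psi> (\<delta> - \<beta>) * F \<delta>))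
           = (\<Sum>\<alpha>\<in>{\<alpha>. \<forall>i. \<alpha> i \<le> (\<delta> - \<gamma>) i}. \<phi> \<alpha> * \<psi> (\<delta> - \<gamma> - \<alpha>) * F \<delta>)"
        proof (rule sum.reindex_bij_witness[where j="\<lambda>\<beta>. \<beta> - \<gamma>" and i="\<lambda>\<alpha>. \<alpha> + \<gamma>"])
          fix a assume a: "a \<in> {\<alpha>. \<forall>i. \<alpha> i \<le> (\<delta> - \<gamma>) i}"
          show "a + \<gamma> - \<gamma> = a" by (simp add: fun_eq_iff)
          show "a + \<gamma> \<in> {\<beta>. (\<forall>i. \<gamma> i \<le> \<beta> i) \<and> (\<forall>i. \<beta> i \<le> \<delta> i)}"
            using a gd by simp (metis add.commute le_diff_conv2)
        next
          fix b assume b: "b \<in> {\<beta>. (\<forall>i. \<gamma> i \<le> \<beta> i) \<and> (\<forall>i. \<beta> i \<le> \<delta> i)}"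
          then show "b - \<gamma> + \<gamma> = b" by (simp add: fun_eq_iff)
          show "b - \<gamma> \<in> {\<alpha>. \<forall>i. \<alpha> i \<le> (\<delta> - \<gamma>) i}" using b by (simp add: diff_le_mono)
          have e: "\<delta> - \<gamma> - (b - \<gamma>) = \<delta> - b" using b by (simp add: fun_eq_iff)
          show "\<phi> (b - \<gamma>) * \<psi> (\<delta> - \<gamma> - (b - \<gamma>)) * F \<delta> = \<phi> (b - \<gamma>) * (\<psi> (\<delta> - b) * F \<delta>)"
            unfolding e by (simp add: mult.assoc)
        qed
        also have "\<dots> = ps_mult \<phi> \<psi> (\<delta> - \<gamma>) * F \<delta>"
          by (simp add: ps_mult_def sum_distrib_right)
        finally show ?thesis using gd by simp
      qed
    qed
    also have "\<dots> = contract r (ps_mult \<phi> \<psi>) F \<gamma>" using g by (simp add: contract_def)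
    finally show ?thesis by simp
  qed
qed



lemma contract_one: assumes F: "F \<in> DP r" shows "contract r ps_one F = F"
proof (rule ext)
  fix \<gamma>
  have Smon: "\<beta> \<in> mon r" if "F \<beta> \<noteq> 0" for \<beta> using F that unfolding DP_def PS_def by blast
  show "contract r ps_one F \<gamma> = F \<gamma>"
  proof (cases "\<gamma> \<in> mon r")
    case False then show ?thesis using Smon by (auto simp: contract_def)
  next
    case True
    have eq: "(if (\<forall>i. \<gamma> i \<le> \<beta> i) then ps_one (\<beta> - \<gamma>) * F \<beta> else 0) = (if \<beta> = \<gamma> then F \<beta> else 0)" for \<beta>
    proof -
      have "(\<forall>i. \<gamma> i \<le> \<beta> i) \<and> \<beta> - \<gamma> = 0 \<longleftrightarrow> \<beta> = \<gamma>"
        by (auto simp: fun_eq_iff) (meson antisym diff_is_0_eq)+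
      then show ?thesis by (auto simp: ps_one_def)
    qed
    show ?thesis using True DP_fin[OF F] unfolding contract_def eq
      by (simp add: sum.delta')
  qed
qed

lemma Ann_ideal:
  assumes F: "F \<in> DP r" and p: "\<phi> \<in> Ann r F" and q: "\<psi> \<in> PS r"
  shows "ps_mult \<phi> \<psi> \<in> Ann r F"
proof -
  have "contract r (ps_mult \<phi> \<psi>) F = contract r (ps_mult \<psi> \<phi>) F"
    by (simp only: ps_mult_comm[of \<phi> \<psi>])
  also have "\<dots> = contract r \<psi> (contract r \<phi> F)" by (rule contract_mult[OF F])
  also have "\<dots> = (\<lambda>_. 0)" using p by (simp add: Ann_def contract_zero)
  finally show ?thesis using p q by (simp add: Ann_def ps_mult_PS)
qed

lemma Ann_unit:
  assumes F: "F \<in> DP r" and u: "is_unit_R r u"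
  shows "Ann r (contract r u F) = Ann r F"
proof -
  obtain v where u: "u \<in> PS r" and v: "v \<in> PS r" "ps_mult u v = ps_one"
    using u by (auto simp: is_unit_R_def)
  have uF: "contract r u F \<in> DP r" by (rule contract_DP[OF F])
  show ?thesis
  proof (safe)
    fix \<phi> assume p: "\<phi> \<in> Ann r (contract r u F)"
    have vu: "ps_mult v u = ps_one" using v(2) ps_mult_comm by metis
    have "contract r \<phi> F = contract r \<phi> (contract r (ps_mult v u) F)"
      by (simp only: vu contract_one[OF F])
    also have "\<dots> = contract r \<phi> (contract r v (contract r u F))"
      by (simp only: contract_mult[OF F])
    also have "\<dots> = contract r (ps_mult \<phi> v) (contract r u F)"
      by (rule contract_mult[OF uF, symmetric])
    also have "\<dots> = contract r (ps_mult v \<phi>) (contract r u F)"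
      by (simp only: ps_mult_comm[of \<phi> v])
    also have "\<dots> = contract r v (contract r \<phi> (contract r u F))"
      by (simp add: contract_mult[OF uF])
    also have "\<dots> = (\<lambda>_. 0)" using p by (simp add: Ann_def contract_zero)
    finally show "\<phi> \<in> Ann r F" using p by (simp add: Ann_def)
  next
    fix \<phi> assume p: "\<phi> \<in> Ann r F"
    have "contract r \<phi> (contract r u F) = contract r (ps_mult \<phi> u) F"
      by (rule contract_mult[OF F, symmetric])
    also have "\<dots> = contract r (ps_mult u \<phi>) F"
      by (simp only: ps_mult_comm[of \<phi> u])
    also have "\<dots> = contract r u (contract r \<phi> F)"
      by (rule contract_mult[OF F])
    also have "\<dots> = (\<lambda>_. 0)" using p by (simp add: Ann_def contract_zero)
    finally show "\<phi> \<in> Ann r (contract r u F)" using p by (simp add: Ann_def)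
  qed
qed

lemma contract_agree:
  assumes F: "F \<in> DP r" and G: "G \<in> DP r" and ag: "\<forall>\<beta>. N \<le> mdeg r \<beta> \<longrightarrow> F \<beta> = G \<beta>"
    and p: "\<rho> \<in> mpow r N"
  shows "contract r \<rho> F = contract r \<rho> G"
proof (rule ext)
  fix \<gamma>
  let ?T = "{\<beta>. F \<beta> \<noteq> 0} \<union> {\<beta>. G \<beta> \<noteq> 0}"
  have fin: "finite ?T" using F G by (simp add: DP_fin)
  have "(if (\<forall>i. \<gamma> i \<le> \<beta> i) then \<rho> (\<beta> - \<gamma>) * F \<beta> else 0) =
        (if (\<forall>i. \<gamma> i \<le> \<beta> i) then \<rho> (\<beta> - \<gamma>) * G \<beta> else 0)" for \<beta>
  proof (cases "N \<le> mdeg r \<beta>")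
    case True then show ?thesis using ag by simp
  next
    case False
    then have "mdeg r (\<beta> - \<gamma>) < N" using mdeg_diff_le[of r \<beta> \<gamma>] by linarith
    then show ?thesis using p by (simp add: mpow_def)
  qed
  then show "contract r \<rho> F \<gamma> = contract r \<rho> G \<gamma>"
    using contract_sum[OF F fin] contract_sum[OF G fin] by simp
qed

lemma socdeg_Ann:
  fixes F :: "('k::field) coeffs"
  assumes F: "F \<in> DP r" and d: "has_degree r F j"
  shows "socdeg r (Ann r F) = j"
  unfolding socdeg_def
proof (rule Greatest_equality)
  obtain \<beta> where b: "F \<beta> \<noteq> 0" "mdeg r \<beta> = j" using d by (auto simp: has_degree_def)
  have bm: "\<beta> \<in> mon r" using F b unfolding DP_def PS_def by blast
  let ?\<phi> = "\<lambda>\<alpha>. if \<alpha> = \<beta> then (1::'k) else 0"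
  have "?\<phi> \<in> mpow r j" using bm b by (auto simp: mpow_def PS_def)
  moreover have "?\<phi> \<notin> Ann r F"
  proof
    assume "?\<phi> \<in> Ann r F"
    then have "contract r ?\<phi> F 0 = 0" by (simp add: Ann_def)
    moreover have "contract r ?\<phi> F 0 = F \<beta>"
    proof -
      have "contract r ?\<phi> F 0 = (\<Sum>\<beta>'\<in>{\<beta>. F \<beta> \<noteq> 0}. if \<beta>' = \<beta> then F \<beta>' else 0)"
      proof -
        have "(0::nat\<Rightarrow>nat) \<in> mon r" by (simp add: mon_def)
        then show ?thesis unfolding contract_def by (simp add: fun_diff_def, intro sum.cong refl, simp)
      qed
      also have "\<dots> = F \<beta>" using DP_fin[OF F] b by (simp add: sum.delta)
      finally show ?thesis .
    qed
    ultimately show False using b by simp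
  qed
  ultimately show "\<not> mpow r j \<subseteq> Ann r F" by blast
next
  fix y assume y: "\<not> mpow r y \<subseteq> Ann r F"
  show "y \<le> j"
  proof (rule ccontr)
    assume "\<not> y \<le> j"
    have "mpow r y \<subseteq> Ann r F"
    proof
      fix \<phi> :: "'k coeffs" assume p: "\<phi> \<in> mpow r y"
      have "contract r \<phi> F = (\<lambda>_. 0)"
        unfolding contract_def
      proof (intro ext, simp, intro impI sum.neutral ballI)
        fix \<gamma> \<beta> assume "\<beta> \<in> {\<beta>. F \<beta> \<noteq> 0}"
        then have "mdeg r \<beta> \<le> j" using d by (auto simp: has_degree_def)
        then have "mdeg r (\<beta> - \<gamma>) < y" using mdeg_diff_le[of r \<beta> \<gamma>] \<open>\<not> y \<le> j\<close> by linarith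
        then show "(if \<forall>i. \<gamma> i \<le> \<beta> i then \<phi> (\<beta> - \<gamma>) * F \<beta> else 0) = 0"
          using p by (simp add: mpow_def)
      qed
      then show "\<phi> \<in> Ann r F" using p by (simp add: Ann_def mpow_def)
    qed
    then show False using y by simp
  qed
qed




definition subsp :: "('k::field) coeffs set \<Rightarrow> bool" where
  "subsp V \<longleftrightarrow> 0 \<in> V \<and> (\<forall>x\<in>V. \<forall>y\<in>V. x + y \<in> V) \<and> (\<forall>c. \<forall>x\<in>V. (\<lambda>z. c * x z) \<in> V)"

lemma subsp_0: "subsp V \<Longrightarrow> 0 \<in> V" by (simp add: subsp_def)
lemma subsp_add: "subsp V \<Longrightarrow> x \<in> V \<Longrightarrow> y \<in> V \<Longrightarrow> x + y \<in> V" by (simp add: subsp_def)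
lemma subsp_smult: "subsp V \<Longrightarrow> x \<in> V \<Longrightarrow> (\<lambda>z. c * x z) \<in> V" by (simp add: subsp_def)
lemma subsp_diff: assumes "subsp V" "x \<in> V" "y \<in> V" shows "x - y \<in> V"
proof -
  have eq: "x - y = x + (\<lambda>z. (-1) * y z)" by (simp add: fun_eq_iff)
  have "(\<lambda>z. (-1) * y z) \<in> V" by (rule subsp_smult[OF assms(1,3)])
  then have "x + (\<lambda>z. (-1) * y z) \<in> V" by (rule subsp_add[OF assms(1,2)])
  then show ?thesis by (subst eq)
qed

lemma subsp_lincomb: assumes V: "subsp V" and S: "finite S"
  shows "(\<forall>s\<in>S. g s \<in> V) \<Longrightarrow> (\<Sum>s\<in>S. (\<lambda>x. c s * g s x)) \<in> V"
  using S by (induction S rule: finite_induct) (auto intro: subsp_add[OF V] subsp_smult[OF V] subsp_0[OF V])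

lemma ssum_iff: "z \<in> ssum U V \<longleftrightarrow> (\<exists>u\<in>U. \<exists>v\<in>V. z = u + v)"
  by (auto simp: ssum_def)

lemma ssum_right: "0 \<in> U \<Longrightarrow> v \<in> V \<Longrightarrow> v \<in> ssum U V"
  unfolding ssum_iff by (metis add.left_neutral)
lemma ssum_left: "0 \<in> V \<Longrightarrow> u \<in> U \<Longrightarrow> u \<in> ssum U V"
  unfolding ssum_iff by (metis add.right_neutral)
lemma ssum_mem: "u \<in> U \<Longrightarrow> v \<in> V \<Longrightarrow> u + v \<in> ssum U V"
  unfolding ssum_iff by blast

lemma subsp_ssum: assumes U: "subsp U" and V: "subsp V" shows "subsp (ssum U V)"
proof -
  have "0 \<in> ssum U V" using subsp_0[OF U] subsp_0[OF V] unfolding ssum_iff by (metis add.right_neutral)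
  moreover have "x + y \<in> ssum U V" if hx: "x \<in> ssum U V" and hy: "y \<in> ssum U V" for x y
  proof -
    obtain u v where "u \<in> U" "v \<in> V" "x = u + v"
      using hx unfolding ssum_iff by blast
    moreover obtain u' v' where "u' \<in> U" "v' \<in> V" "y = u' + v'"
      using hy unfolding ssum_iff by blast
    ultimately have eq: "x + y = (u + u') + (v + v')" by (simp add: algebra_simps)
    have "u + u' \<in> U" "v + v' \<in> V" using subsp_add[OF U] subsp_add[OF V] \<open>u \<in> U\<close> \<open>u' \<in> U\<close> \<open>v \<in> V\<close> \<open>v' \<in> V\<close> by auto
    then show ?thesis unfolding ssum_iff using eq by blast
  qed
  moreover have "(\<lambda>z. c * x z) \<in> ssum U V" if hx: "x \<in> ssum U V" for x c
  proof -
    obtain u v where "u \<in> U" "v \<in> V" "x = u + v"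
      using hx unfolding ssum_iff by blast
    then have eq: "(\<lambda>z. c * x z) = (\<lambda>z. c * u z) + (\<lambda>z. c * v z)" by (simp add: fun_eq_iff algebra_simps)
    have "(\<lambda>z. c * u z) \<in> U" "(\<lambda>z. c * v z) \<in> V" using subsp_smult[OF U] subsp_smult[OF V] \<open>u \<in> U\<close> \<open>v \<in> V\<close> by auto
    then show ?thesis unfolding ssum_iff using eq by blast
  qed
  ultimately show ?thesis by (simp add: subsp_def)
qed

lemma subsp_Int: "subsp U \<Longrightarrow> subsp V \<Longrightarrow> subsp (U \<inter> V)"
  unfolding subsp_def by auto

lemma qdim_ssum:
  assumes X: "subsp X" and Y: "subsp Y" and I: "subsp I" and YX: "Y \<subseteq> X" and XI: "X \<inter> I \<subseteq> Y"
  shows "qdim (ssum X I) (ssum Y I) = qdim X Y"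
proof -
  let ?ind = "\<lambda>S U. \<forall>c. (\<Sum>s\<in>S. (\<lambda>x. c s * s x)) \<in> U \<longrightarrow> (\<forall>s\<in>S. c s = 0)"
  have "{card S |S. finite S \<and> S \<subseteq> ssum X I \<and> ?ind S (ssum Y I)} =
        {card S |S. finite S \<and> S \<subseteq> X \<and> ?ind S Y}"
  proof (rule set_eqI, rule iffI)
    fix n assume "n \<in> {card S |S. finite S \<and> S \<subseteq> X \<and> ?ind S Y}"
    then obtain S where S: "n = card S" "finite S" "S \<subseteq> X" "?ind S Y" by blast
    have "S \<subseteq> ssum X I" using S(3) ssum_left[OF subsp_0[OF I]] by blast
    moreover have "?ind S (ssum Y I)"
    proof (intro allI impI)
      fix c assume "(\<Sum>s\<in>S. (\<lambda>x. c s * s x)) \<in> ssum Y I"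
      then obtain y i where yi: "y \<in> Y" "i \<in> I" "(\<Sum>s\<in>S. (\<lambda>x. c s * s x)) = y + i"
        by (auto simp: ssum_iff)
      have sX: "(\<Sum>s\<in>S. (\<lambda>x. c s * s x)) \<in> X" using subsp_lincomb[OF X S(2), of "\<lambda>s. s" c] S(3) by blast
      have "(\<Sum>s\<in>S. (\<lambda>x. c s * s x)) - y \<in> X" using sX yi YX subsp_diff[OF X] by blast
      then have "i \<in> X" using yi by simp
      then have "i \<in> Y" using XI yi by auto
      then have "(\<Sum>s\<in>S. (\<lambda>x. c s * s x)) \<in> Y" using yi subsp_add[OF Y] by simp
      then show "\<forall>s\<in>S. c s = 0" using S(4) by blast
    qed
    ultimately show "n \<in> {card S |S. finite S \<and> S \<subseteq> ssum X I \<and> ?ind S (ssum Y I)}"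
      using S by blast
  next
    fix n assume "n \<in> {card S |S. finite S \<and> S \<subseteq> ssum X I \<and> ?ind S (ssum Y I)}"
    then obtain S where S: "n = card S" "finite S" "S \<subseteq> ssum X I" "?ind S (ssum Y I)" by blast
    define xs where "xs = (\<lambda>s. SOME x. x \<in> X \<and> s - x \<in> I)"
    have xs: "xs s \<in> X \<and> s - xs s \<in> I" if hs: "s \<in> S" for s
    proof -
      have "s \<in> ssum X I" using S(3) hs by blast
      then obtain x i where "x \<in> X" "i \<in> I" "s = x + i" unfolding ssum_iff by blast
      then have "\<exists>x. x \<in> X \<and> s - x \<in> I" by (intro exI[of _ x]) simp
      then show ?thesis unfolding xs_def by (rule someI_ex)
    qed
    have inj: "inj_on xs S"
    proof (rule inj_onI, rule ccontr)
      fix s t assume st: "s \<in> S" "t \<in> S" "xs s = xs t" "s \<noteq> t"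
      define c where "c = (\<lambda>v::'a coeffs. if v = s then (1::'a) else if v = t then -1 else 0)"
      have "(\<Sum>v\<in>S. (\<lambda>x. c v * v x)) = (\<Sum>v\<in>S. (\<lambda>x. (if v = s then s x else 0) + (if v = t then - t x else 0)))"
        using st(4) by (intro sum.cong[OF refl] ext) (auto simp: c_def)
      also have "\<dots> = s - t"
      proof (rule ext)
        fix z show "(\<Sum>v\<in>S. (\<lambda>x. (if v = s then s x else 0) + (if v = t then - t x else 0))) z = (s - t) z"
          using S(2) st(1,2) by (simp add: sum_fun_apply sum.distrib)
      qed
      also have "\<dots> = (s - xs s) - (t - xs t)" using st by simp
      also have "\<dots> \<in> I" using subsp_diff[OF I, of "s - xs s" "t - xs t"] xs[OF st(1)] xs[OF st(2)] by blast
      finally have "(\<Sum>v\<in>S. (\<lambda>x. c v * v x)) \<in> I" .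
      then have "(\<Sum>v\<in>S. (\<lambda>x. c v * v x)) \<in> ssum Y I"
        by (rule ssum_right[OF subsp_0[OF Y]])
      then have "c s = 0" using S(4) st by blast
      then show False by (simp add: c_def)
    qed
    have "card (xs ` S) = n" using inj S by (simp add: card_image)
    moreover have "finite (xs ` S)" "xs ` S \<subseteq> X" using S xs by auto
    moreover have "?ind (xs ` S) Y"
    proof (intro allI impI)
      fix c assume c: "(\<Sum>s\<in>xs ` S. (\<lambda>x. c s * s x)) \<in> Y"
      have "(\<Sum>s\<in>S. (\<lambda>x. c (xs s) * s x)) =
            (\<Sum>s\<in>S. (\<lambda>x. c (xs s) * xs s x)) + (\<Sum>s\<in>S. (\<lambda>x. c (xs s) * (s - xs s) x))"
        unfolding sum.distrib[symmetric] by (intro sum.cong[OF refl] ext) (simp add: algebra_simps)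
      also have "(\<Sum>s\<in>S. (\<lambda>x. c (xs s) * xs s x)) = (\<Sum>s\<in>xs ` S. (\<lambda>x. c s * s x))"
        using inj by (simp add: sum.reindex)
      finally have eq: "(\<Sum>s\<in>S. (\<lambda>x. c (xs s) * s x)) =
            (\<Sum>s\<in>xs ` S. (\<lambda>x. c s * s x)) + (\<Sum>s\<in>S. (\<lambda>x. c (xs s) * (s - xs s) x))" .
      have "(\<Sum>s\<in>S. (\<lambda>x. c (xs s) * (s - xs s) x)) \<in> I"
        using subsp_lincomb[OF I S(2), of "\<lambda>s. s - xs s" "\<lambda>s. c (xs s)"] xs by blast
      then have "(\<Sum>s\<in>S. (\<lambda>x. c (xs s) * s x)) \<in> ssum Y I"
        unfolding eq using c by (intro ssum_mem)
      then have "(\<Sum>s\<in>S. (\<lambda>x. (c \<circ> xs) s * s x)) \<in> ssum Y I" by simp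
      then have "\<forall>s\<in>S. (c \<circ> xs) s = 0" using S(4) by blast
      then show "\<forall>s\<in>xs ` S. c s = 0" by auto
    qed
    ultimately show "n \<in> {card S |S. finite S \<and> S \<subseteq> X \<and> ?ind S Y}" by blast
  qed
  then show ?thesis unfolding qdim_def by simp
qed



lemma subsp_PS: "subsp (PS r)" unfolding subsp_def PS_def by auto
lemma subsp_mpow: "subsp (mpow r i)" unfolding subsp_def mpow_def PS_def by auto

lemma contract_add: "contract r (\<phi> + \<psi>) F = contract r \<phi> F + contract r \<psi> F"
  by (simp add: contract_def fun_eq_iff sum.distrib[symmetric] if_distrib distrib_right cong: if_cong)

lemma contract_smult: "contract r (\<lambda>z. c * \<phi> z) F = (\<lambda>z. c * contract r \<phi> F z)"
  by (simp add: contract_def fun_eq_iff sum_distrib_left)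
    (auto intro!: sum.cong)

lemma subsp_Ann: "subsp (Ann r F)"
proof -
  have z: "contract r 0 F = (\<lambda>_. 0)" by (rule ext) (simp add: contract_def cong: if_cong)
  have "0 \<in> Ann r F" unfolding Ann_def using z subsp_0[OF subsp_PS] by simp
  moreover have "x + y \<in> Ann r F" if hx: "x \<in> Ann r F" and hy: "y \<in> Ann r F" for x y
  proof -
    have "x + y \<in> PS r" using hx hy subsp_add[OF subsp_PS] unfolding Ann_def by blast
    moreover have "contract r (x + y) F = (\<lambda>_. 0)" using hx hy unfolding Ann_def contract_add
      by (simp add: fun_eq_iff)
    ultimately show ?thesis unfolding Ann_def by blast
  qed
  moreover have "(\<lambda>z. c * x z) \<in> Ann r F" if hx: "x \<in> Ann r F" for x c
  proof -
    have "(\<lambda>z. c * x z) \<in> PS r" using hx subsp_smult[OF subsp_PS] unfolding Ann_def by blast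
    moreover have "contract r (\<lambda>z. c * x z) F = (\<lambda>_. 0)" using hx unfolding Ann_def contract_smult
      by (simp add: fun_eq_iff)
    ultimately show ?thesis unfolding Ann_def by blast
  qed
  ultimately show ?thesis unfolding subsp_def by blast
qed

lemma ps_mult_add: "ps_mult (\<phi> + \<phi>') \<psi> = ps_mult \<phi> \<psi> + ps_mult \<phi>' \<psi>"
  by (simp add: ps_mult_def fun_eq_iff sum.distrib[symmetric] distrib_right)
lemma ps_mult_smult: "ps_mult (\<lambda>z. c * \<phi> z) \<psi> = (\<lambda>z. c * ps_mult \<phi> \<psi> z)"
  by (simp add: ps_mult_def fun_eq_iff sum_distrib_left mult.assoc)
lemma ps_mult_0: "ps_mult 0 \<psi> = 0"
  by (simp add: ps_mult_def fun_eq_iff)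

lemma subsp_colon: assumes I: "subsp I" shows "subsp (colon r I K)"
  unfolding subsp_def colon_def using subsp_PS[of r] I
  by (auto simp: subsp_def ps_mult_add ps_mult_smult ps_mult_0)


lemma ssumE: assumes "z \<in> ssum U V" obtains u v where "u \<in> U" "v \<in> V" "z = u + v"
  using assms unfolding ssum_iff by blast

lemma ssum_reorg:
  assumes I: "subsp I" and C: "subsp C" and IC: "I \<subseteq> C" and M: "subsp M" and B: "subsp B"
  shows "ssum (ssum (ssum M I \<inter> C) B) I = ssum (ssum (M \<inter> C) B) I"
proof (rule set_eqI, rule iffI)
  fix z assume "z \<in> ssum (ssum (ssum M I \<inter> C) B) I"
  then obtain x i' where x: "x \<in> ssum (ssum M I \<inter> C) B" and i': "i' \<in> I" and z: "z = x + i'"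
    by (rule ssumE)
  from x obtain w b where w: "w \<in> ssum M I \<inter> C" and b: "b \<in> B" and x': "x = w + b"
    by (rule ssumE)
  from w have wC: "w \<in> C" by blast
  from w have "w \<in> ssum M I" by blast
  then obtain m i where m: "m \<in> M" and i: "i \<in> I" and w': "w = m + i" by (rule ssumE)
  have "i \<in> C" using i IC by blast
  then have "w - i \<in> C" using subsp_diff[OF C wC] by blast
  moreover have "w - i = m" using w' by simp
  ultimately have mC: "m \<in> C" by simp
  have "m + b \<in> ssum (M \<inter> C) B" using m mC b by (intro ssum_mem) blast+
  moreover have "i + i' \<in> I" using subsp_add[OF I i i'] .
  ultimately have "(m + b) + (i + i') \<in> ssum (ssum (M \<inter> C) B) I" by (rule ssum_mem)
  moreover have "z = (m + b) + (i + i')" using z x' w' by (simp add: algebra_simps)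
  ultimately show "z \<in> ssum (ssum (M \<inter> C) B) I" by simp
next
  fix z assume "z \<in> ssum (ssum (M \<inter> C) B) I"
  then obtain x i where x: "x \<in> ssum (M \<inter> C) B" and i: "i \<in> I" and z: "z = x + i"
    by (rule ssumE)
  from x obtain m b where m: "m \<in> M \<inter> C" and b: "b \<in> B" and x': "x = m + b"
    by (rule ssumE)
  have "m \<in> ssum M I" using m ssum_left[OF subsp_0[OF I]] by blast
  then have "m \<in> ssum M I \<inter> C" using m by blast
  then have "m + b \<in> ssum (ssum M I \<inter> C) B" using b by (rule ssum_mem)
  then show "z \<in> ssum (ssum (ssum M I \<inter> C) B) I" unfolding z x' using i by (rule ssum_mem)
qed

definition Xs :: "nat \<Rightarrow> ('k::field) coeffs set \<Rightarrow> nat \<Rightarrow> nat \<Rightarrow> 'k coeffs set" where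
  "Xs r I k i = ssum (mpow r i \<inter> colon r I (mpow r k)) (mpow r (Suc i))"

lemma mpow_anti: "i \<le> k \<Longrightarrow> mpow r k \<subseteq> mpow r i"
  unfolding mpow_def by auto

lemma mpow_PS: "mpow r k \<subseteq> PS r" unfolding mpow_def by auto

lemma Ann_colon: assumes F: "F \<in> DP r" and K: "K \<subseteq> PS r" shows "Ann r F \<subseteq> colon r (Ann r F) K"
  unfolding colon_def using Ann_ideal[OF F] K by (auto simp: Ann_def)

lemma subsp_Xs: "subsp I \<Longrightarrow> subsp (Xs r I k i)"
  unfolding Xs_def by (intro subsp_ssum subsp_Int subsp_mpow subsp_colon)

lemma Wsp_Xs: assumes F: "F \<in> DP r"
  shows "Wsp r (Ann r F) b i = ssum (Xs r (Ann r F) (socdeg r (Ann r F) + 1 - b - i) i) (Ann r F)"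
  unfolding Wsp_def Xs_def
  by (rule ssum_reorg[OF subsp_Ann subsp_colon[OF subsp_Ann] Ann_colon[OF F mpow_PS] subsp_mpow subsp_mpow])

lemma HA_Xs: assumes F: "F \<in> DP r"
  shows "HA r (Ann r F) b i = qdim (Xs r (Ann r F) (socdeg r (Ann r F) + 1 - b - i) i)
                                   (Xs r (Ann r F) (socdeg r (Ann r F) + 1 - Suc b - i) i)"
proof -
  let ?I = "Ann r F" and ?j = "socdeg r (Ann r F)"
  let ?X = "Xs r ?I (?j + 1 - b - i) i" and ?Y = "Xs r ?I (?j + 1 - Suc b - i) i"
  have YX: "?Y \<subseteq> ?X"
  proof -
    have le: "?j + 1 - Suc b - i \<le> ?j + 1 - b - i" by arith
    have "colon r ?I (mpow r (?j + 1 - Suc b - i)) \<subseteq> colon r ?I (mpow r (?j + 1 - b - i))"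
      using mpow_anti[OF le, of r] unfolding colon_def by blast
    then show ?thesis unfolding Xs_def ssum_def by blast
  qed
  have XI: "?X \<inter> ?I \<subseteq> ?Y"
  proof
    fix x assume x: "x \<in> ?X \<inter> ?I"
    then have "x \<in> ?X" by blast
    then obtain m n where mn: "m \<in> mpow r i \<inter> colon r ?I (mpow r (?j + 1 - b - i))" "n \<in> mpow r (Suc i)" "x = m + n"
      unfolding Xs_def by (rule ssumE)
    have "n \<in> mpow r i" using mn(2) mpow_anti[of i "Suc i" r] by auto
    then have "m + n \<in> mpow r i" using mn(1) subsp_add[OF subsp_mpow] by blast
    then have "x \<in> mpow r i" using mn(3) by simp
    moreover have "x \<in> colon r ?I (mpow r (?j + 1 - Suc b - i))" using Ann_colon[OF F mpow_PS] x by blast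
    ultimately show "x \<in> ?Y" unfolding Xs_def by (intro ssum_left[OF subsp_0[OF subsp_mpow]]) auto
  qed
  show ?thesis unfolding HA_def Wsp_Xs[OF F]
    by (rule qdim_ssum[OF subsp_Xs[OF subsp_Ann] subsp_Xs[OF subsp_Ann] subsp_Ann YX XI])
qed

lemma colon_sub:
  assumes F: "F \<in> DP r" and G: "G \<in> DP r" and ag: "\<forall>\<beta>. N \<le> mdeg r \<beta> \<longrightarrow> F \<beta> = G \<beta>"
    and ik: "N \<le> i + k"
  shows "mpow r i \<inter> colon r (Ann r F) (mpow r k) \<subseteq> mpow r i \<inter> colon r (Ann r G) (mpow r k)"
proof
  fix \<phi> assume p: "\<phi> \<in> mpow r i \<inter> colon r (Ann r F) (mpow r k)"
  have "ps_mult \<phi> \<psi> \<in> Ann r G" if q: "\<psi> \<in> mpow r k" for \<psi>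
  proof -
    have "ps_mult \<phi> \<psi> \<in> mpow r (i + k)" using p q by (intro ps_mult_mpow) auto
    then have pm: "ps_mult \<phi> \<psi> \<in> mpow r N" using mpow_anti[OF ik] by blast
    have "ps_mult \<phi> \<psi> \<in> Ann r F" using p q unfolding colon_def by blast
    then show ?thesis using contract_agree[OF F G ag pm] by (simp add: Ann_def)
  qed
  then show "\<phi> \<in> mpow r i \<inter> colon r (Ann r G) (mpow r k)" using p unfolding colon_def by blast
qed

lemma HA_agree:
  assumes F: "F \<in> DP r" and G: "G \<in> DP r" and jF: "socdeg r (Ann r F) = j" and jG: "socdeg r (Ann r G) = j"
    and ag: "\<forall>\<beta>. j - a \<le> mdeg r \<beta> \<longrightarrow> F \<beta> = G \<beta>" and b: "b \<le> a"
  shows "HA r (Ann r F) b i = HA r (Ann r G) b i"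
proof -
  have ag': "\<forall>\<beta>. j - a \<le> mdeg r \<beta> \<longrightarrow> G \<beta> = F \<beta>" using ag by auto
  have X: "Xs r (Ann r F) (j + 1 - c - i) i = Xs r (Ann r G) (j + 1 - c - i) i" if "c \<le> Suc a" for c
  proof -
    have h: "j - a \<le> i + (j + 1 - c - i)" using that by linarith
    have "mpow r i \<inter> colon r (Ann r F) (mpow r (j + 1 - c - i)) = mpow r i \<inter> colon r (Ann r G) (mpow r (j + 1 - c - i))"
      using colon_sub[OF F G ag h] colon_sub[OF G F ag' h] by (rule equalityI)
    then show ?thesis unfolding Xs_def by simp
  qed
  show ?thesis unfolding HA_Xs[OF F] HA_Xs[OF G] jF jG using X[of b] X[of "Suc b"] b by simp
qed


lemma psd_agree:
  assumes F: "F \<in> DP r" and G: "G \<in> DP r" and jF: "socdeg r (Ann r F) = j" and jG: "socdeg r (Ann r G) = j"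
    and ag: "\<forall>\<beta>. j - a \<le> mdeg r \<beta> \<longrightarrow> F \<beta> = G \<beta>"
  shows "psd r (Ann r F) a = psd r (Ann r G) a"
  unfolding psd_def using HA_agree[OF F G jF jG ag]
  by (intro map_cong refl ext) auto

theorem corollary1p15:
  fixes r j a :: nat and f :: "('k::field) coeffs"
  assumes "f \<in> DP r" and "has_degree r f j" and "a \<le> j"
  shows "psd r (Ann r f) a = psd r (Ann r (trunc_ge r f (j - a))) a
    \<and> (\<forall>g u. g \<in> DP r \<longrightarrow> has_degree r g j \<longrightarrow> is_unit_R r u \<longrightarrow>
          g - contract r u f \<in> Dlt r (j - a) \<longrightarrow>
          psd r (Ann r g) a = psd r (Ann r f) a)
    \<and> is_modification r (Ann r f) (Ann r (trunc_ge r f (j - a))) (a + 1)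
    \<and> Ann r f \<inter> mpow r (j - a) = Ann r (trunc_ge r f (j - a)) \<inter> mpow r (j - a)"
proof -
  note F = assms(1) and d = assms(2)
  let ?t = "trunc_ge r f (j - a)"
  have tDP: "?t \<in> DP r" using F unfolding DP_def PS_def trunc_ge_def
    by (auto intro: finite_subset)
  have td: "has_degree r ?t j" using d assms(3) unfolding has_degree_def trunc_ge_def
    by (auto split: if_splits)
  have jf: "socdeg r (Ann r f) = j" by (rule socdeg_Ann[OF F d])
  have jt: "socdeg r (Ann r ?t) = j" by (rule socdeg_Ann[OF tDP td])
  have agt: "\<forall>\<beta>. j - a \<le> mdeg r \<beta> \<longrightarrow> f \<beta> = ?t \<beta>" by (simp add: trunc_ge_def)
  have P1: "psd r (Ann r f) a = psd r (Ann r ?t) a" by (rule psd_agree[OF F tDP jf jt agt])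
  have P4: "Ann r f \<inter> mpow r (j - a) = Ann r ?t \<inter> mpow r (j - a)"
    using contract_agree[OF F tDP agt] by (auto simp: Ann_def)
  have P3: "is_modification r (Ann r f) (Ann r ?t) (a + 1)"
    unfolding is_modification_def jf using P4 by simp
  have P2: "psd r (Ann r g) a = psd r (Ann r f) a"
    if g: "g \<in> DP r" "has_degree r g j" "is_unit_R r u" "g - contract r u f \<in> Dlt r (j - a)" for g u
  proof -
    let ?f1 = "contract r u f"
    have f1: "?f1 \<in> DP r" by (rule contract_DP[OF F])
    have A: "Ann r ?f1 = Ann r f" by (rule Ann_unit[OF F g(3)])
    have jg: "socdeg r (Ann r g) = j" by (rule socdeg_Ann[OF g(1,2)])
    have j1: "socdeg r (Ann r ?f1) = j" using A jf by simp
    have ag: "\<forall>\<beta>. j - a \<le> mdeg r \<beta> \<longrightarrow> g \<beta> = ?f1 \<beta>"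
    proof (intro allI impI)
      fix \<beta> assume "j - a \<le> mdeg r \<beta>"
      then have "\<not> mdeg r \<beta> < j - a" by simp
      then have "(g - ?f1) \<beta> = 0" using g(4) unfolding Dlt_def by blast
      then show "g \<beta> = ?f1 \<beta>" by simp
    qed
    show ?thesis using psd_agree[OF g(1) f1 jg j1 ag] A by simp
  qed
  show ?thesis using P1 P2 P3 P4 by blast
qed


end
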